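(* Let $p\ge2$ and let $\epsilon>0$ be sufficiently small. For $\chi\in[0,\pi]$, $\psi\in[-\pi/2,\pi/2]$ set $A_0=e^{i\chi\sigma_z}$, $a_0=i\sigma_x\cos\psi+i\sigma_z\sin\psi$ and $$Q_p(\chi,\psi)=\big[(\,A_0,\ A_0^{-1}a_0A_0^{p+1},\ A_0^{-1}a_0A_0,\ a_0^{-1}\,)\big]\in R(T^2,2).$$ If $Q_p(\chi,\psi)=L_s(\phi,\theta)$ for some spherical-polar coordinates $(\phi,\theta)$, then $\phi=\pi/2$ and there is $n\in\{0,1,\dots,p-1\}$ with $$\chi=(n+\tfrac12)\tfrac{\pi}{p},\qquad \psi=(-1)^{n+1}\big(\tfrac{\pi}{2}-\epsilon\big).$$
   Context: Pauli matrices standard; $[A,B]=ABA^{-1}B^{-1}$. $R(T^2,2)$ is the space of tuples $(A,B,a,b)\in SU(2)^4$ with $\operatorname{tr}a=\operatorname{tr}b=0$ and $[A,B]ab=1$ modulo simultaneous conjugation (the tuple defining $Q_p$ satisfies these conditions). For $\nu=\epsilon\sin\phi$, $L_s(\phi,\theta)=[(A,B,a,b)]$ with $a=i\sigma_z$, $h=(\cos^2\nu+\sin^2\nu\sin^2\theta)^{-1/2}(i\sigma_x\cos\nu-i\sigma_z\sin\nu\sin\theta)$, $A=h(\cos\phi+i\sin\phi(\sigma_x\cos\theta+\sigma_y\sin\theta))$, $B=\cos\nu+i\sin\nu(\sigma_x\cos\theta+\sigma_y\sin\theta)$, $b=-ha^{-1}h^{-1}$. ($Q_p(\chi,\psi)$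 is the image of the disk Lagrangian point $[(e^{i\chi\sigma_z},1,a_0,a_0^{-1})]$ under the mapping class $\alpha_1^{-1}T_a^p$ that produces the simple knot in $L(p,1)$ representing $1\in H_1(L(p,1);\mathbb{Z})$.) *)

theory Defs
  imports "HOL-Analysis.Analysis"
begin

type_synonym cmat = "complex^2^2"

definition mk2 :: "complex \<Rightarrow> complex \<Rightarrow> complex \<Rightarrow> complex \<Rightarrow> cmat" where
  "mk2 a b c d = (\<chi> i j. if i = 1 then (if j = 1 then a else b) else (if j = 1 then c else d))"

definition sigma_x :: cmat where "sigma_x = mk2 0 1 1 0"
definition sigma_y :: cmat where "sigma_y = mk2 0 (-\<i>) \<i> 0"
definition sigma_z :: cmat where "sigma_z = mk2 1 0 0 (-1)"

definition cscal :: "complex \<Rightarrow> cmat \<Rightarrow> cmat" where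
  "cscal c M = (\<chi> i j. c * M $ i $ j)"

definition mtrace :: "cmat \<Rightarrow> complex" where
  "mtrace M = M $ 1 $ 1 + M $ 2 $ 2"

definition madj :: "cmat \<Rightarrow> cmat" where
  "madj M = (\<chi> i j. cnj (M $ j $ i))"

definition SU2 :: "cmat set" where
  "SU2 = {U. U ** madj U = mat 1 \<and> det U = 1}"

definition mpow :: "cmat \<Rightarrow> nat \<Rightarrow> cmat" where
  "mpow M n = (((**) M) ^^ n) (mat 1)"

definition commutator :: "cmat \<Rightarrow> cmat \<Rightarrow> cmat" where
  "commutator A B = A ** B ** matrix_inv A ** matrix_inv B"

definition RT2 :: "(cmat \<times> cmat \<times> cmat \<times> cmat) set" where
  "RT2 = {(A,B,a,b). A \<in> SU2 \<and> B \<in> SU2 \<and> a \<in> SU2 \<and> b \<in> SU2 \<and>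
      mtrace a = 0 \<and> mtrace b = 0 \<and> commutator A B ** a ** b = mat 1}"

definition same_class :: "(cmat \<times> cmat \<times> cmat \<times> cmat) \<Rightarrow> (cmat \<times> cmat \<times> cmat \<times> cmat) \<Rightarrow> bool" where
  "same_class X Y = (case X of (A,B,a,b) \<Rightarrow> case Y of (A',B',a',b') \<Rightarrow>
     (\<exists>g\<in>SU2. A' = g ** A ** matrix_inv g \<and> B' = g ** B ** matrix_inv g \<and>
               a' = g ** a ** matrix_inv g \<and> b' = g ** b ** matrix_inv g))"

text \<open>Q_p(chi,psi), with A_0 = e^{i chi sigma_z} = cos chi + i sin chi sigma_z.\<close>
definition A0 :: "real \<Rightarrow> cmat" where
  "A0 chi = mat (cos chi) + cscal (\<i> * sin chi) sigma_z"

definition a0 :: "real \<Rightarrow> cmat" where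
  "a0 \<psi> = cscal (\<i> * cos \<psi>) sigma_x + cscal (\<i> * sin \<psi>) sigma_z"

definition Qp :: "nat \<Rightarrow> real \<Rightarrow> real \<Rightarrow> cmat \<times> cmat \<times> cmat \<times> cmat" where
  "Qp p chi \<psi> = (A0 chi,
                 matrix_inv (A0 chi) ** a0 \<psi> ** mpow (A0 chi) (p + 1),
                 matrix_inv (A0 chi) ** a0 \<psi> ** A0 chi,
                 matrix_inv (a0 \<psi>))"

definition Ls :: "real \<Rightarrow> real \<Rightarrow> real \<Rightarrow> cmat \<times> cmat \<times> cmat \<times> cmat" where
  "Ls eps \<phi> \<theta> =
    (let \<nu> = eps * sin \<phi>;
         a = cscal \<i> sigma_z;
         h = cscal (complex_of_real ((cos \<nu> ^ 2 + sin \<nu> ^ 2 * sin \<theta> ^ 2) powr (-1/2)))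
               (cscal (\<i> * cos \<nu>) sigma_x - cscal (\<i> * sin \<nu> * sin \<theta>) sigma_z);
         n = cscal (complex_of_real (cos \<theta>)) sigma_x + cscal (complex_of_real (sin \<theta>)) sigma_y;
         A = h ** (mat (cos \<phi>) + cscal (\<i> * sin \<phi>) n);
         B = mat (cos \<nu>) + cscal (\<i> * sin \<nu>) n;
         b = - (h ** matrix_inv a ** matrix_inv h)
     in (A, B, a, b))"

end

theory Submission
  imports Defs
begin


lemma mk2_nth[simp]: "mk2 a b c d $ 1 $ 1 = a" "mk2 a b c d $ 1 $ 2 = b"
  "mk2 a b c d $ 2 $ 1 = c" "mk2 a b c d $ 2 $ 2 = d"
  by (simp_all add: mk2_def)

lemma cmat_eq_iff: "(M::cmat) = N \<longleftrightarrow> M$1$1 = N$1$1 \<and> M$1$2 = N$1$2 \<and> M$2$1 = N$2$1 \<and> M$2$2 = N$2$2"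
  by (auto simp: vec_eq_iff forall_2)

lemma mk2_mult[simp]: "mk2 a b c d ** mk2 e f g h = mk2 (a*e+b*g) (a*f+b*h) (c*e+d*g) (c*f+d*h)"
  by (simp add: cmat_eq_iff matrix_matrix_mult_def sum_2)

lemma mk2_add[simp]: "mk2 a b c d + mk2 e f g h = mk2 (a+e) (b+f) (c+g) (d+h)"
  by (simp add: cmat_eq_iff)
lemma mk2_diff[simp]: "mk2 a b c d - mk2 e f g h = mk2 (a-e) (b-f) (c-g) (d-h)"
  by (simp add: cmat_eq_iff)
lemma mk2_uminus[simp]: "- mk2 a b c d = mk2 (-a) (-b) (-c) (-d)"
  by (simp add: cmat_eq_iff)
lemma cscal_mk2[simp]: "cscal k (mk2 a b c d) = mk2 (k*a) (k*b) (k*c) (k*d)"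
  by (simp add: cmat_eq_iff cscal_def)
lemma mat_mk2: "(mat x :: cmat) = mk2 x 0 0 x"
  by (simp add: cmat_eq_iff mat_def)
lemma mtrace_mk2[simp]: "mtrace (mk2 a b c d) = a + d"
  by (simp add: mtrace_def)
lemma det_mk2[simp]: "det (mk2 a b c d) = a*d - b*c"
  by (simp add: det_2)

lemma cmat_mk2: "(M::cmat) = mk2 (M$1$1) (M$1$2) (M$2$1) (M$2$2)"
  by (simp add: cmat_eq_iff)

lemma inv_unique: assumes "(A::cmat) ** J = mat 1" "J ** A = mat 1" shows "matrix_inv A = J"
proof -
  have ex: "\<exists>K. A ** K = mat 1 \<and> K ** A = mat 1" using assms by blast
  define K where "K = matrix_inv A"
  have K: "A ** K = mat 1 \<and> K ** A = mat 1" unfolding K_def matrix_inv_def by (rule someI_ex[OF ex])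
  have "K = K ** (A ** J)" using assms by simp
  also have "\<dots> = (K ** A) ** J" by (simp add: matrix_mul_assoc)
  also have "\<dots> = J" using K by simp
  finally show ?thesis unfolding K_def .
qed

lemma inv_mk2: assumes "a*d - b*c = 1"
  shows "matrix_inv (mk2 a b c d) = mk2 d (-b) (-c) a"
  apply (rule inv_unique) using assms by (simp_all add: mat_mk2 algebra_simps)

lemma inv_props: assumes "det (g::cmat) \<noteq> 0"
  shows "g ** matrix_inv g = mat 1" "matrix_inv g ** g = mat 1"
proof -
  have "invertible g" using assms invertible_det_nz by blast
  then have ex: "\<exists>K. g ** K = mat 1 \<and> K ** g = mat 1" unfolding invertible_def by blast
  show "g ** matrix_inv g = mat 1" "matrix_inv g ** g = mat 1"
    unfolding matrix_inv_def using someI_ex[OF ex] by auto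
qed

lemma mtrace_trace: "mtrace M = trace M"
  by (simp add: mtrace_def trace_def sum_2)

lemma conj_trace: assumes "det (g::cmat) \<noteq> 0"
  shows "mtrace (g ** X ** matrix_inv g) = mtrace X"
proof -
  have "mtrace (g ** X ** matrix_inv g) = trace (matrix_inv g ** (g ** X))"
    unfolding mtrace_trace by (rule trace_mul_sym)
  also have "\<dots> = trace X" using inv_props[OF assms]
    by (simp add: matrix_mul_assoc)
  finally show ?thesis by (simp add: mtrace_trace)
qed

lemma conj_mult: assumes "det (g::cmat) \<noteq> 0"
  shows "(g ** X ** matrix_inv g) ** (g ** Y ** matrix_inv g) = g ** (X ** Y) ** matrix_inv g"
proof -
  have "(g ** X ** matrix_inv g) ** (g ** Y ** matrix_inv g) = g ** X ** (matrix_inv g ** g) ** Y ** matrix_inv g"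
    by (simp add: matrix_mul_assoc)
  also have "\<dots> = g ** (X ** Y) ** matrix_inv g" using inv_props[OF assms] by (simp add: matrix_mul_assoc)
  finally show ?thesis .
qed

lemma A0_mk2: "A0 chi = mk2 (cis chi) 0 0 (cis (-chi))"
  by (simp add: A0_def mat_mk2 sigma_z_def cmat_eq_iff complex_eq_iff cos_of_real sin_of_real)

lemma mpow_A0: "mpow (A0 chi) n = mk2 (cis (real n * chi)) 0 0 (cis (-(real n * chi)))"
proof (induction n)
  case 0 then show ?case by (simp add: mpow_def mat_mk2)
next
  case (Suc n)
  have "mpow (A0 chi) (Suc n) = A0 chi ** mpow (A0 chi) n" by (simp add: mpow_def)
  then show ?case using Suc by (simp add: A0_mk2 cis_mult algebra_simps)
qed

lemma A0_inv: "matrix_inv (A0 chi) = mk2 (cis (-chi)) 0 0 (cis chi)"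
  unfolding A0_mk2 by (rule inv_unique) (simp_all add: mat_mk2 cis_mult)




lemma a0_mk2: "a0 psi = mk2 (\<i> * sin psi) (\<i> * cos psi) (\<i> * cos psi) (- \<i> * sin psi)"
  by (simp add: a0_def sigma_x_def sigma_z_def cmat_eq_iff cos_of_real sin_of_real)

definition D :: "real \<Rightarrow> real \<Rightarrow> cmat" where "D c s = mk2 (Complex c s) 0 0 (Complex c (-s))"
definition AA :: "real \<Rightarrow> real \<Rightarrow> cmat" where "AA c s = mk2 (\<i> * s) (\<i> * c) (\<i> * c) (- \<i> * s)"

lemma cis_C: "cis x = Complex (cos x) (sin x)" by (simp add: complex_eq_iff)

lemma Qp_eq: "Qp p chi psi = (D (cos chi) (sin chi),
   D (cos chi) (- sin chi) ** AA (cos psi) (sin psi) ** (D (cos chi) (sin chi) ** D (cos (real p * chi)) (sin (real p * chi))),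
   D (cos chi) (- sin chi) ** AA (cos psi) (sin psi) ** D (cos chi) (sin chi),
   matrix_inv (a0 psi))"
proof -
  have "mpow (A0 chi) (Suc p) = A0 chi ** mpow (A0 chi) p" by (simp add: mpow_def)
  also have "\<dots> = D (cos chi) (sin chi) ** D (cos (real p * chi)) (sin (real p * chi))"
    by (simp only: mpow_A0) (simp add: A0_mk2 cis_C D_def)
  finally have m: "mpow (A0 chi) (p + 1) = D (cos chi) (sin chi) ** D (cos (real p * chi)) (sin (real p * chi))" by simp
  have a: "A0 chi = D (cos chi) (sin chi)" by (simp add: A0_mk2 cis_C D_def)
  have i: "matrix_inv (A0 chi) = D (cos chi) (- sin chi)" by (simp add: A0_inv cis_C D_def)
  have b: "a0 psi = AA (cos psi) (sin psi)" by (simp add: a0_mk2 AA_def)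
  show ?thesis by (simp only: Qp_def m i) (simp only: a b)
qed

lemma qA: "mtrace (D c s) = of_real (2*c)" by (simp add: D_def complex_eq_iff)

lemma qB: "c\<^sup>2 + s\<^sup>2 = 1 \<Longrightarrow> mtrace (D c (-s) ** AA u v ** (D c s ** D cq sq)) = of_real (-2 * v * sq)"
  by (simp add: D_def AA_def complex_eq_iff algebra_simps) algebra


lemma qAB: "c\<^sup>2 + s\<^sup>2 = 1 \<Longrightarrow> mtrace (D c s ** (D c (-s) ** AA u v ** (D c s ** D cq sq))) = of_real (-2 * v * (sq * c + cq * s))"
  by (simp add: D_def AA_def complex_eq_iff algebra_simps) algebra

lemma qAa: "c\<^sup>2 + s\<^sup>2 = 1 \<Longrightarrow> mtrace (D c s ** (D c (-s) ** AA u v ** D c s)) = of_real (-2 * v * s)"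
  by (simp add: D_def AA_def complex_eq_iff algebra_simps) algebra

lemma qBa: "c\<^sup>2 + s\<^sup>2 = 1 \<Longrightarrow> u\<^sup>2 + v\<^sup>2 = 1 \<Longrightarrow> mtrace ((D c (-s) ** AA u v ** (D c s ** D cq sq)) ** (D c (-s) ** AA u v ** D c s)) = of_real (-2 * cq)"
  by (simp add: D_def AA_def complex_eq_iff algebra_simps) algebra


lemma qABa: "c\<^sup>2 + s\<^sup>2 = 1 \<Longrightarrow> u\<^sup>2 + v\<^sup>2 = 1 \<Longrightarrow> mtrace (D c s ** (D c (-s) ** AA u v ** (D c s ** D cq sq)) ** (D c (-s) ** AA u v ** D c s)) = of_real (-2 * (v^2 * (cq * c - sq * s) + u^2 * (cq * c + sq * s)))"
  by (simp add: D_def AA_def complex_eq_iff algebra_simps) algebra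




definition EE :: "real \<Rightarrow> real \<Rightarrow> real \<Rightarrow> real \<Rightarrow> cmat" where
  "EE co si ct st = mk2 (Complex co 0) (Complex (si * st) (si * ct)) (Complex (-si * st) (si * ct)) (Complex co 0)"

lemma Ls_eq: "Ls eps ph th = (AA (((cos (eps * sin ph))\<^sup>2 + (sin (eps * sin ph))\<^sup>2 * (sin th)\<^sup>2) powr (-1/2) * cos (eps * sin ph))
      (- (((cos (eps * sin ph))\<^sup>2 + (sin (eps * sin ph))\<^sup>2 * (sin th)\<^sup>2) powr (-1/2) * sin (eps * sin ph) * sin th))
   ** EE (cos ph) (sin ph) (cos th) (sin th),
   EE (cos (eps * sin ph)) (sin (eps * sin ph)) (cos th) (sin th),
   mk2 \<i> 0 0 (-\<i>),
   snd (snd (snd (Ls eps ph th))))"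
  by (simp add: Ls_def Let_def AA_def EE_def mat_mk2 sigma_x_def sigma_y_def sigma_z_def cmat_eq_iff
      complex_eq_iff cos_of_real sin_of_real algebra_simps)

lemma lA: "mtrace (AA hx hz ** EE co si ct st) = of_real (-2 * si * hx * ct)"
  by (simp add: AA_def EE_def complex_eq_iff algebra_simps)

lemma lB: "mtrace (EE co si ct st) = of_real (2 * co)"
  by (simp add: EE_def complex_eq_iff)

lemma lAB: "ct\<^sup>2 + st\<^sup>2 = 1 \<Longrightarrow> mtrace (AA hx hz ** EE co si ct st ** EE co' si' ct st) = of_real (-2 * (si * co' + co * si') * hx * ct)"
  by (simp add: AA_def EE_def complex_eq_iff algebra_simps)

lemma lAa: "mtrace (AA hx hz ** EE co si ct st ** mk2 \<i> 0 0 (-\<i>)) = of_real (-2 * co * hz + 2 * si * hx * st)"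
  by (simp add: AA_def EE_def complex_eq_iff algebra_simps)

lemma lBa: "mtrace (EE co si ct st ** mk2 \<i> 0 0 (-\<i>)) = 0"
  by (simp add: EE_def complex_eq_iff algebra_simps)

lemma lABa: "ct\<^sup>2 + st\<^sup>2 = 1 \<Longrightarrow> mtrace (AA hx hz ** EE co si ct st ** EE co' si' ct st ** mk2 \<i> 0 0 (-\<i>)) = of_real (-2 * (co * co' - si * si') * hz + 2 * (si * co' + co * si') * hx * st)"
  by (simp add: AA_def EE_def complex_eq_iff algebra_simps) algebra




lemma sc_traces: assumes "same_class (A,B,a,b) (A',B',a',b')"
  shows "mtrace A' = mtrace A \<and> mtrace B' = mtrace B \<and> mtrace (A' ** B') = mtrace (A ** B) \<and>
    mtrace (A' ** a') = mtrace (A ** a) \<and> mtrace (B' ** a') = mtrace (B ** a) \<and>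
    mtrace (A' ** B' ** a') = mtrace (A ** B ** a)"
proof -
  obtain g where g: "g \<in> SU2" and e: "A' = g ** A ** matrix_inv g" "B' = g ** B ** matrix_inv g"
    "a' = g ** a ** matrix_inv g" using assms unfolding same_class_def by auto
  have d: "det g \<noteq> 0" using g by (simp add: SU2_def)
  show ?thesis unfolding e using d by (simp add: conj_mult conj_trace)
qed

lemma real_part:
  fixes p :: nat and eps chi psi ph th :: real
  assumes p: "p \<ge> 2" and eps: "0 < eps" "eps < 1"
    and r: "0 \<le> chi" "chi \<le> pi" "-pi/2 \<le> psi" "psi \<le> pi/2" "0 \<le> ph" "ph \<le> pi"
    and nu: "nu = eps * sin ph" and k: "k = ((cos nu)\<^sup>2 + (sin nu)\<^sup>2 * (sin th)\<^sup>2) powr (-1/2)"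
    and hx: "hx = k * cos nu" and hz: "hz = - (k * sin nu * sin th)"
    and E1: "-2 * sin ph * hx * cos th = 2 * cos chi"
    and E2: "2 * cos nu = -2 * sin psi * sin (real p * chi)"
    and E3: "-2 * (sin ph * cos nu + cos ph * sin nu) * hx * cos th = -2 * sin psi * (sin (real p * chi) * cos chi + cos (real p * chi) * sin chi)"
    and E4: "-2 * cos ph * hz + 2 * sin ph * hx * sin th = -2 * sin psi * sin chi"
    and E5: "0 = -2 * cos (real p * chi)"
    and E6: "-2 * (cos ph * cos nu - sin ph * sin nu) * hz + 2 * (sin ph * cos nu + cos ph * sin nu) * hx * sin th
       = -2 * ((sin psi)\<^sup>2 * (cos (real p * chi) * cos chi - sin (real p * chi) * sin chi) + (cos psi)\<^sup>2 * (cos (real p * chi) * cos chi + sin (real p * chi) * sin chi))"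
  shows "ph = pi/2 \<and> (\<exists>n::nat. n < p \<and> chi = (real n + 1/2) * pi / real p \<and>
                        psi = (-1) ^ (n + 1) * (pi/2 - eps))"
proof -
  define cp where "cp = cos (real p * chi)"
  define sp where "sp = sin (real p * chi)"
  have cp0: "cp = 0" using E5 cp_def by simp
  have sp2: "sp\<^sup>2 = 1" using cp0 unfolding cp_def sp_def by (simp add: sin_squared_eq)
  have sph: "0 \<le> sin ph" using r by (simp add: sin_ge_zero)
  have sph1: "sin ph \<le> 1" by simp
  have nu0: "0 \<le> nu" "nu \<le> eps" using nu sph sph1 eps by (auto simp: mult_left_le)
  have cnu: "0 < cos nu" using nu0 eps by (intro cos_gt_zero_pi) (use pi_gt3 in auto)
  have "0 < (cos nu)\<^sup>2 + (sin nu)\<^sup>2 * (sin th)\<^sup>2" using cnu by (intro add_pos_nonneg) auto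
  then have kpos: "0 < k" unfolding k by simp
  have hx0: "hx \<noteq> 0" using hx kpos cnu by simp
  have schi: "0 \<le> sin chi" using r by (simp add: sin_ge_zero)
  have E2': "sin psi * sp = - cos nu" using E2 sp_def by simp
  have key: "cos ph * sin nu * hx * cos th = 0"
  proof -
    have "(sin ph * cos nu + cos ph * sin nu) * hx * cos th = sin psi * sp * cos chi"
      using E3 cp0 unfolding cp_def sp_def by (simp add: algebra_simps)
    also have "\<dots> = - cos nu * cos chi" using E2' by simp
    also have "\<dots> = cos nu * sin ph * hx * cos th"
    proof -
      have "cos chi = - (sin ph * hx * cos th)" using E1 by linarith
      then show ?thesis by simp
    qed
    finally show ?thesis by (simp add: algebra_simps)
  qed
  have snu: "sin nu \<noteq> 0"
  proof
    assume s0: "sin nu = 0"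
    have "nu = 0"
    proof (rule ccontr)
      assume "nu \<noteq> 0" then have "0 < nu" using nu0 by simp
      then have "0 < sin nu" using nu0 eps pi_gt3 by (intro sin_gt_zero) auto
      then show False using s0 by simp
    qed
    then have sph0: "sin ph = 0" using nu eps by simp
    have hz0: "hz = 0" using hz s0 by simp
    have "cos chi = 0" using E1 sph0 by simp
    then have "sin chi = 1" using schi power2_eq_1_iff[of "sin chi"] by (simp add: sin_squared_eq)
    then have "sin psi = 0" using E4 hz0 sph0 by simp
    then show False using E2' \<open>nu = 0\<close> by simp
  qed
  have cph: "cos ph = 0"
  proof -
    have "cos ph = 0 \<or> cos th = 0" using key snu hx0 by simp
    moreover
    { assume cth: "cos th = 0"
      have sth2: "(sin th)\<^sup>2 = 1" using cth by (simp add: sin_squared_eq)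
      have k1: "k = 1" unfolding k using sth2 by simp
      have "cos chi = 0" using E1 cth by simp
      then have sc1: "sin chi = 1" using schi power2_eq_1_iff[of "sin chi"] by (simp add: sin_squared_eq)
      have spsi: "sin psi = - cos nu * sp" using E2' sp2
        by (metis mult.assoc mult_1_right power2_eq_square)
      have cpsi2: "(cos psi)\<^sup>2 = 1 - (sin psi)\<^sup>2" by (simp add: cos_squared_eq)
      have cn2: "(cos nu)\<^sup>2 + (sin nu)\<^sup>2 = 1" by (rule sin_cos_squared_add2)
      define sg where "sg = sin th * sp"
      have sg2: "sg\<^sup>2 = 1" using sth2 sp2 sg_def by (simp add: power_mult_distrib)
      have E4': "cos ph * sin nu + sin ph * cos nu = sg * cos nu"
      proof -
        have "sin th * (cos ph * sin nu + sin ph * cos nu) = cos nu * sp"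
          using E4 hx hz k1 sc1 spsi by (simp add: algebra_simps)
        then have "sin th * (sin th * (cos ph * sin nu + sin ph * cos nu)) = sin th * (cos nu * sp)" by simp
        then show ?thesis using sth2 sg_def by algebra
      qed
      have E6': "(cos ph * cos nu - sin ph * sin nu) * sin nu + (sin ph * cos nu + cos ph * sin nu) * cos nu = sg * ((cos nu)\<^sup>2 - (sin nu)\<^sup>2)"
      proof -
        have "sin th * ((cos ph * cos nu - sin ph * sin nu) * sin nu + (sin ph * cos nu + cos ph * sin nu) * cos nu) = sp * ((cos nu)\<^sup>2 - (sin nu)\<^sup>2)"
          using E6 hx hz k1 sc1 spsi cpsi2 cp0 cn2 sp2 unfolding cp_def[symmetric] sp_def[symmetric]
          by algebra
        then have "sin th * (sin th * ((cos ph * cos nu - sin ph * sin nu) * sin nu + (sin ph * cos nu + cos ph * sin nu) * cos nu)) = sin th * (sp * ((cos nu)\<^sup>2 - (sin nu)\<^sup>2))" by simp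
        then show ?thesis using sth2 sg_def by algebra
      qed
      have "sin nu * (cos ph * cos nu - sin ph * sin nu + sg * sin nu) = 0"
        using E4' E6' cn2 by algebra
      then have X: "cos ph * cos nu - sin ph * sin nu = - sg * sin nu" using snu by simp
      have "cos ph = cos nu * (cos ph * cos nu - sin ph * sin nu) + sin nu * (cos ph * sin nu + sin ph * cos nu)"
        using cn2 by algebra
      also have "\<dots> = 0" using X E4' by algebra
      finally have "cos ph = 0" .
    }
    ultimately show ?thesis by blast
  qed
  have ph: "ph = pi/2"
    using arccos_cos[of ph] r cph by simp
  then have nue: "nu = eps" using nu by (simp only: sin_pi_half mult_1_right)
  obtain m where m: "odd m" "real p * chi = real m * (pi/2)"
  proof -
    have "cos (real p * chi) = 0" using cp0 cp_def by simp
    then have "(\<exists>n. odd n \<and> real p * chi = real n * (pi/2)) \<or> (\<exists>n. odd n \<and> real p * chi = - (real n * (pi/2)))"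
      by (simp add: cos_zero_iff)
    moreover have "\<not> (\<exists>n. odd n \<and> real p * chi = - (real n * (pi/2)))"
    proof
      assume "\<exists>n. odd n \<and> real p * chi = - (real n * (pi/2))"
      then obtain n where "odd n" "real p * chi = - (real n * (pi/2))" by blast
      moreover have "n \<ge> 1" using \<open>odd n\<close> by (cases n) auto
      moreover have "0 \<le> real p * chi" using r by simp
      moreover have "real n * (pi/2) > 0" using \<open>n \<ge> 1\<close> by simp
      ultimately show False by linarith
    qed
    ultimately show ?thesis using that by blast
  qed
  obtain n where n: "m = 2*n+1" using m(1) oddE by blast
  have pp: "real p > 0" using p by simp
  have chi_eq: "chi = (real n + 1/2) * pi / real p"
    using m(2) n pp by (simp add: field_simps)
  have nlt: "n < p"
  proof -
    have "(real n + 1/2) * pi / real p \<le> pi" using chi_eq r by simp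
    then have "(real n + 1/2) * pi \<le> pi * real p" using pp by (simp add: field_simps)
    then have "real n + 1/2 \<le> real p" using pi_gt3 by (simp add: mult.commute)
    then show ?thesis by linarith
  qed
  have spv: "sp = (-1)^n"
  proof -
    have "sp = sin (real n * pi + pi/2)" unfolding sp_def using m(2) n by (simp add: algebra_simps)
    also have "\<dots> = (-1)^n" by (simp add: sin_add)
    finally show ?thesis .
  qed
  have spsi: "sin psi = - cos eps * (-1)^n"
  proof -
    have "sin psi = (sin psi * sp) * sp" using sp2 by (simp add: power2_eq_square)
    also have "\<dots> = - cos eps * (-1)^n" using E2' spv nue by simp
    finally show ?thesis .
  qed
  define t where "t = (-1::real) ^ (n + 1) * (pi/2 - eps)"
  have st: "sin t = - cos eps * (-1)^n"
    unfolding t_def by (cases "even n") (simp_all add: sin_diff)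
  have tr: "-(pi/2) \<le> t" "t \<le> pi/2" unfolding t_def using eps pi_gt3
    by (cases "even n"; simp)+
  have "psi = t"
    using arcsin_sin[of psi] arcsin_sin[OF tr] r spsi st by simp
  then show ?thesis using ph chi_eq nlt t_def by blast
qed




theorem lemma5p5:
  fixes p :: nat
  assumes "p \<ge> 2"
  shows "\<exists>eps0>0. \<forall>eps. 0 < eps \<and> eps < eps0 \<longrightarrow>
           (\<forall>chi \<psi> \<phi> \<theta>. 0 \<le> chi \<and> chi \<le> pi \<and> -pi/2 \<le> \<psi> \<and> \<psi> \<le> pi/2 \<and>
              0 \<le> \<phi> \<and> \<phi> \<le> pi \<and> 0 \<le> \<theta> \<and> \<theta> < 2*pi \<and>
              same_class (Qp p chi \<psi>) (Ls eps \<phi> \<theta>) \<longrightarrow>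
              \<phi> = pi/2 \<and>
              (\<exists>n::nat. n < p \<and> chi = (real n + 1/2) * pi / real p \<and>
                        \<psi> = (-1) ^ (n + 1) * (pi/2 - eps)))"
proof (rule exI[of _ 1], rule conjI, simp, intro allI impI)
  fix eps chi psi ph th :: real
  assume eps: "0 < eps \<and> eps < 1"
  assume H: "0 \<le> chi \<and> chi \<le> pi \<and> -pi/2 \<le> psi \<and> psi \<le> pi/2 \<and>
              0 \<le> ph \<and> ph \<le> pi \<and> 0 \<le> th \<and> th < 2*pi \<and>
              same_class (Qp p chi psi) (Ls eps ph th)"
  define nu where "nu = eps * sin ph"
  define k where "k = ((cos nu)\<^sup>2 + (sin nu)\<^sup>2 * (sin th)\<^sup>2) powr (-1/2)"
  define hx where "hx = k * cos nu"
  define hz where "hz = - (k * sin nu * sin th)"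
  have sc: "same_class (Qp p chi psi) (Ls eps ph th)" using H by blast
  have sc2: "same_class (D (cos chi) (sin chi),
   D (cos chi) (- sin chi) ** AA (cos psi) (sin psi) ** (D (cos chi) (sin chi) ** D (cos (real p * chi)) (sin (real p * chi))),
   D (cos chi) (- sin chi) ** AA (cos psi) (sin psi) ** D (cos chi) (sin chi),
   matrix_inv (a0 psi))
   (AA hx hz ** EE (cos ph) (sin ph) (cos th) (sin th), EE (cos nu) (sin nu) (cos th) (sin th), mk2 \<i> 0 0 (-\<i>),
     snd (snd (snd (Ls eps ph th))))"
    using sc unfolding Qp_eq hx_def hz_def k_def nu_def by (subst (asm) Ls_eq) assumption
  note T = sc_traces[OF sc2]
  have cs: "\<And>x::real. (cos x)\<^sup>2 + (sin x)\<^sup>2 = 1" by simp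
  note T2 = T[unfolded qA qB[OF cs] qAB[OF cs] qAa[OF cs] qBa[OF cs cs] qABa[OF cs cs]
      lA lB lAB[OF cs] lAa lBa lABa[OF cs] of_real_eq_iff]
  have E5': "(0::complex) = of_real (-2 * cos (real p * chi))" using T2 by blast
  have E: "-2 * sin ph * hx * cos th = 2 * cos chi"
    "2 * cos nu = -2 * sin psi * sin (real p * chi)"
    "-2 * (sin ph * cos nu + cos ph * sin nu) * hx * cos th = -2 * sin psi * (sin (real p * chi) * cos chi + cos (real p * chi) * sin chi)"
    "-2 * cos ph * hz + 2 * sin ph * hx * sin th = -2 * sin psi * sin chi"
    "0 = -2 * cos (real p * chi)"
    "-2 * (cos ph * cos nu - sin ph * sin nu) * hz + 2 * (sin ph * cos nu + cos ph * sin nu) * hx * sin th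
       = -2 * ((sin psi)\<^sup>2 * (cos (real p * chi) * cos chi - sin (real p * chi) * sin chi) + (cos psi)\<^sup>2 * (cos (real p * chi) * cos chi + sin (real p * chi) * sin chi))"
    using T2 apply blast+
    using E5' apply (metis of_real_0 of_real_eq_iff)
    using T2 apply blast
    done
  show "ph = pi/2 \<and> (\<exists>n::nat. n < p \<and> chi = (real n + 1/2) * pi / real p \<and>
                        psi = (-1) ^ (n + 1) * (pi/2 - eps))"
  proof -
    have r: "0 \<le> chi" "chi \<le> pi" "-pi/2 \<le> psi" "psi \<le> pi/2" "0 \<le> ph" "ph \<le> pi" using H by simp_all
    have e1: "0 < eps" and e2: "eps < 1" using eps by simp_all
    show ?thesis by (rule real_part[OF assms e1 e2 r nu_def k_def hx_def hz_def E(1) E(2) E(3) E(4) E(5) E(6)])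
  qed
qed


end
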